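(* Let $p$ be a prime and let $G$ be a finite $p$-group. Let $c_p$ be the number of distinct cyclic subgroups of order $p$ of $G$; then $\mathcal{P}^*(G)$ has exactly $c_p$ connected components $H_1,\dots,H_{c_p}$. For each $i$, let $\tilde{H_i}$ denote the subgraph of $\mathcal{P}(G)$ induced on the vertex set $V(H_i)\cup\{1\}$. Then $$\kappa(\mathcal{P}(G))=\kappa(\tilde{H_1})\cdot\kappa(\tilde{H_2})\cdots\kappa(\tilde{H_{c_p}}),$$ where $\kappa(\Gamma)$ denotes the number of spanning trees of a graph $\Gamma$.
   Context: For a finite group $G$, the power graph $\mathcal{P}(G)$ is the simple undirected graph with vertex set $G$, two distinct vertices $x,y$ being adjacent iff $\langle x\rangle\subseteq\langle y\rangle$ or $\langle y\rangle\subseteq\langle x\rangle$. $\mathcal{P}^*(G)$ denotes the graph obtained from $\mathcal{P}(G)$ by deleting the vertex $1$. *)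

theory Defs
  imports "HOL-Algebra.Algebra"
begin

text \<open>Simple graphs are given by a vertex set V and an adjacency relation E;
  the graph considered is always the one induced on V, i.e. only pairs of
  vertices of V matter.\<close>

definition reach :: "'a set \<Rightarrow> ('a \<Rightarrow> 'a \<Rightarrow> bool) \<Rightarrow> 'a \<Rightarrow> 'a \<Rightarrow> bool" where
  "reach V E = (\<lambda>x y. x \<in> V \<and> y \<in> V \<and> E x y)\<^sup>*\<^sup>*"

definition connected_graph :: "'a set \<Rightarrow> ('a \<Rightarrow> 'a \<Rightarrow> bool) \<Rightarrow> bool" where
  "connected_graph V E \<longleftrightarrow> V \<noteq> {} \<and> (\<forall>x\<in>V. \<forall>y\<in>V. reach V E x y)"

definition components :: "'a set \<Rightarrow> ('a \<Rightarrow> 'a \<Rightarrow> bool) \<Rightarrow> 'a set set" where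
  "components V E = {{y \<in> V. reach V E x y} | x. x \<in> V}"

definition edges :: "'a set \<Rightarrow> ('a \<Rightarrow> 'a \<Rightarrow> bool) \<Rightarrow> 'a set set" where
  "edges V E = {{x, y} | x y. x \<in> V \<and> y \<in> V \<and> x \<noteq> y \<and> E x y}"

definition has_cycle :: "'a set set \<Rightarrow> bool" where
  "has_cycle T \<longleftrightarrow> (\<exists>vs. length vs \<ge> 3 \<and> distinct vs \<and>
      (\<forall>i < length vs. {vs ! i, vs ! ((i + 1) mod length vs)} \<in> T))"

definition spanning_tree :: "'a set \<Rightarrow> ('a \<Rightarrow> 'a \<Rightarrow> bool) \<Rightarrow> 'a set set \<Rightarrow> bool" where
  "spanning_tree V E T \<longleftrightarrow> T \<subseteq> edges V E \<and>
      connected_graph V (\<lambda>x y. {x, y} \<in> T) \<and> \<not> has_cycle T"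

definition num_spanning_trees :: "'a set \<Rightarrow> ('a \<Rightarrow> 'a \<Rightarrow> bool) \<Rightarrow> nat" where
  "num_spanning_trees V E = card {T. spanning_tree V E T}"

definition power_adj :: "('a, 'b) monoid_scheme \<Rightarrow> 'a \<Rightarrow> 'a \<Rightarrow> bool" where
  "power_adj G x y \<longleftrightarrow> x \<noteq> y \<and>
      (generate G {x} \<subseteq> generate G {y} \<or> generate G {y} \<subseteq> generate G {x})"

definition num_cyclic_subgroups_of_order :: "('a, 'b) monoid_scheme \<Rightarrow> nat \<Rightarrow> nat" where
  "num_cyclic_subgroups_of_order G p =
     card {H. (\<exists>x \<in> carrier G. H = generate G {x}) \<and> card H = p}"

end

theory Submission
  imports Defs "HOL-Algebra.Multiplicative_Group" "HOL-Computational_Algebra.Primes"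
begin

lemma reach_refl: "x \<in> V \<Longrightarrow> reach V E x x"
  by (simp add: reach_def)

lemma reach_trans: "reach V E x y \<Longrightarrow> reach V E y z \<Longrightarrow> reach V E x z"
  unfolding reach_def by (rule rtranclp_trans)

lemma reach_step: "x \<in> V \<Longrightarrow> y \<in> V \<Longrightarrow> E x y \<Longrightarrow> reach V E x y"
  unfolding reach_def by (rule r_into_rtranclp) simp

lemma reach_sym:
  assumes "\<And>a b. E a b \<Longrightarrow> E b a" and "reach V E x y"
  shows "reach V E y x"
proof -
  have "symp (\<lambda>x y. x \<in> V \<and> y \<in> V \<and> E x y)"
    using assms(1) by (auto intro: sympI)
  then show ?thesis using assms(2) unfolding reach_def
    by (meson sympD symp_rtranclp)
qed

lemma reach_mono:
  assumes "reach V E x y" "V \<subseteq> V'" "\<And>a b. a \<in> V \<Longrightarrow> b \<in> V \<Longrightarrow> E a b \<Longrightarrow> E' a b"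
  shows "reach V' E' x y"
proof -
  have "(\<lambda>x y. x \<in> V \<and> y \<in> V \<and> E x y)\<^sup>*\<^sup>* x y" using assms(1) by (simp add: reach_def)
  then have "(\<lambda>x y. x \<in> V' \<and> y \<in> V' \<and> E' x y)\<^sup>*\<^sup>* x y"
  proof (rule rtranclp_mono[THEN predicate2D, rotated])
    show "(\<lambda>x y. x \<in> V \<and> y \<in> V \<and> E x y) \<le> (\<lambda>x y. x \<in> V' \<and> y \<in> V' \<and> E' x y)"
      using assms(2,3) by auto
  qed
  then show ?thesis by (simp add: reach_def)
qed

lemma reach_in: "reach V E x y \<Longrightarrow> x \<in> V \<Longrightarrow> y \<in> V"
  unfolding reach_def by (induction rule: rtranclp_induct) auto

lemma restrict_reach:
  assumes "reach V R x z" "x \<in> A" "v \<in> A" "A \<subseteq> V"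
    and "\<And>a b. a \<in> A \<Longrightarrow> b \<in> V \<Longrightarrow> b \<notin> A \<Longrightarrow> R a b \<Longrightarrow> a = v"
    and "\<And>a b. a \<in> V \<Longrightarrow> a \<notin> A \<Longrightarrow> b \<in> A \<Longrightarrow> R a b \<Longrightarrow> b = v"
  shows "if z \<in> A then reach A R x z else reach A R x v"
  using assms(1) unfolding reach_def[of V]
proof (induction rule: rtranclp_induct)
  case base
  then show ?case using assms(2) by (simp add: reach_refl)
next
  case (step y z)
  show ?case
  proof (cases "y \<in> A")
    case True
    then have ry: "reach A R x y" using step by simp
    show ?thesis
    proof (cases "z \<in> A")
      case True
      have "R y z" using step.hyps(2) by simp
      then have "reach A R y z" using reach_step[of y A z R] True \<open>y \<in> A\<close> by blast
      then show ?thesis using reach_trans[OF ry] True by simp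
    next
      case False
      then have "y = v" using assms(5)[of y z] step.hyps(2) \<open>y \<in> A\<close> by blast
      then show ?thesis using ry False by simp
    qed
  next
    case False
    then have rv: "reach A R x v" using step by simp
    show ?thesis
    proof (cases "z \<in> A")
      case True
      then have "z = v" using assms(6)[of y z] step.hyps(2) False by blast
      then show ?thesis using rv by simp
    next
      case False
      then show ?thesis using rv by simp
    qed
  qed
qed

lemma edge_endpoints:
  assumes "{a, b} \<in> edges A E"
  shows "a \<in> A \<and> b \<in> A \<and> a \<noteq> b \<and> (E a b \<or> E b a)"
  using assms unfolding edges_def by (auto simp: doubleton_eq_iff)

lemma edge_intro:
  assumes "a \<in> A" "b \<in> A" "a \<noteq> b" "E a b \<or> E b a"
  shows "{a, b} \<in> edges A E"
  using assms unfolding edges_def by (auto simp: doubleton_eq_iff)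

lemma edges_mono: "A \<subseteq> B \<Longrightarrow> edges A E \<subseteq> edges B E"
  unfolding edges_def by blast

lemma edges_form: "e \<in> edges A E \<Longrightarrow> \<exists>a b. e = {a, b} \<and> a \<in> A \<and> b \<in> A \<and> a \<noteq> b"
  unfolding edges_def by blast

lemma has_cycle_mono: "has_cycle T \<Longrightarrow> T \<subseteq> T' \<Longrightarrow> has_cycle T'"
  unfolding has_cycle_def by blast

lemma cycle_rotate:
  assumes "\<forall>i < length vs. {vs ! i, vs ! ((i + 1) mod length vs)} \<in> T"
  shows "\<forall>i < length (rotate m vs). {rotate m vs ! i, rotate m vs ! ((i + 1) mod length (rotate m vs))} \<in> T"
proof (intro allI impI)
  fix i assume i: "i < length (rotate m vs)"
  let ?n = "length vs"
  have n: "?n > 0" using i length_rotate[of m vs] by linarith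
  have "rotate m vs ! i = vs ! ((m + i) mod ?n)" using i by (simp add: nth_rotate)
  moreover have "rotate m vs ! ((i + 1) mod ?n) = vs ! ((m + (i + 1) mod ?n) mod ?n)"
    using n by (simp add: nth_rotate)
  moreover have "(m + (i + 1) mod ?n) mod ?n = ((m + i) mod ?n + 1) mod ?n"
    by (metis add.assoc mod_add_left_eq mod_add_right_eq)
  moreover have "(m + i) mod ?n < ?n" using n by simp
  ultimately show "{rotate m vs ! i, rotate m vs ! ((i + 1) mod length (rotate m vs))} \<in> T"
    using assms by simp
qed


section \<open>Spanning trees of a wedge of graphs\<close>

context
  fixes V :: "'a set" and v :: 'a and CC :: "'a set set" and E :: "'a \<Rightarrow> 'a \<Rightarrow> bool"
  assumes v: "v \<in> V" and cover: "\<Union>CC = V - {v}"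
    and disj: "\<And>C C'. C \<in> CC \<Longrightarrow> C' \<in> CC \<Longrightarrow> C \<noteq> C' \<Longrightarrow> C \<inter> C' = {}"
    and cross: "\<And>C C' x y. C \<in> CC \<Longrightarrow> C' \<in> CC \<Longrightarrow> C \<noteq> C' \<Longrightarrow> x \<in> C \<Longrightarrow> y \<in> C' \<Longrightarrow> \<not> E x y"
begin

lemma unique_class: "C \<in> CC \<Longrightarrow> C' \<in> CC \<Longrightarrow> x \<in> C \<Longrightarrow> x \<in> C' \<Longrightarrow> C = C'"
  using disj by blast

lemma class_sub: "C \<in> CC \<Longrightarrow> C \<union> {v} \<subseteq> V"
  using cover v by blast

lemma EC_sub: "C \<in> CC \<Longrightarrow> edges (C \<union> {v}) E \<subseteq> edges V E"
  using class_sub edges_mono by blast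

lemma edges_cover: "e \<in> edges V E \<Longrightarrow> \<exists>C\<in>CC. e \<in> edges (C \<union> {v}) E"
proof -
  assume "e \<in> edges V E"
  then obtain a b where e: "e = {a, b}" "a \<in> V" "b \<in> V" "a \<noteq> b" "E a b"
    unfolding edges_def by blast
  show ?thesis
  proof (cases "a = v")
    case True
    then obtain C where "C \<in> CC" "b \<in> C" using e cover by blast
    then show ?thesis using e True edge_intro[of a "C \<union> {v}" b E] by blast
  next
    case False
    then obtain C where C: "C \<in> CC" "a \<in> C" using e cover by blast
    show ?thesis
    proof (cases "b = v")
      case True
      then show ?thesis using e C edge_intro[of a "C \<union> {v}" b E] by blast
    next
      case False
      then obtain C' where C': "C' \<in> CC" "b \<in> C'" using e cover by blast
      then have "C = C'" using cross[OF C(1) C'(1) _ C(2) C'(2)] e(5) by blast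
      then show ?thesis using e C C' edge_intro[of a "C \<union> {v}" b E] by blast
    qed
  qed
qed

lemma EC_disj:
  assumes "C \<in> CC" "C' \<in> CC" "e \<in> edges (C \<union> {v}) E" "e \<in> edges (C' \<union> {v}) E"
  shows "C = C'"
proof -
  obtain a b where e: "e = {a, b}" "a \<in> C \<union> {v}" "b \<in> C \<union> {v}" "a \<noteq> b"
    using edges_form[OF assms(3)] by blast
  have "a \<in> C' \<union> {v}" "b \<in> C' \<union> {v}" using edge_endpoints assms(4) e(1) by metis+
  then show ?thesis using e assms(1,2) unique_class by blast
qed

lemma restrict_st:
  assumes T: "spanning_tree V E T" and C: "C \<in> CC"
  shows "spanning_tree (C \<union> {v}) E (T \<inter> edges (C \<union> {v}) E)"
proof -
  let ?A = "C \<union> {v}"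
  have TV: "T \<subseteq> edges V E" and conn: "connected_graph V (\<lambda>x y. {x, y} \<in> T)" and nc: "\<not> has_cycle T"
    using T unfolding spanning_tree_def by auto
  have AV: "?A \<subseteq> V" using class_sub C .
  have c5: "a = v" if "a \<in> ?A" "b \<in> V" "b \<notin> ?A" "{a, b} \<in> T" for a b
  proof (rule ccontr)
    assume "a \<noteq> v"
    then have a: "a \<in> C" using that(1) by blast
    have "b \<in> \<Union>CC" using that(2,3) cover by blast
    then obtain C' where C': "C' \<in> CC" "b \<in> C'" by blast
    have ne: "C \<noteq> C'" using C' that(3) by blast
    have "{a, b} \<in> edges V E" using that(4) TV by blast
    then have "E a b \<or> E b a" using edge_endpoints[of a b V E] by blast
    moreover have "\<not> E a b" using cross[OF C C'(1) ne a C'(2)] .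
    moreover have "\<not> E b a" using cross[OF C'(1) C ne[symmetric] C'(2) a] .
    ultimately show False by blast
  qed
  have c6: "b = v" if "a \<in> V" "a \<notin> ?A" "b \<in> ?A" "{a, b} \<in> T" for a b
  proof -
    have "{b, a} \<in> T" using that(4) by (simp add: insert_commute)
    then show ?thesis using c5[of b a] that(1-3) by blast
  qed
  have "reach ?A (\<lambda>a b. {a, b} \<in> T \<inter> edges ?A E) x y" if xy: "x \<in> ?A" "y \<in> ?A" for x y
  proof -
    have "x \<in> V" "y \<in> V" using xy AV by blast+
    then have r: "reach V (\<lambda>a b. {a, b} \<in> T) x y" using conn unfolding connected_graph_def by blast
    have vA: "v \<in> ?A" by blast
    have "if y \<in> ?A then reach ?A (\<lambda>a b. {a, b} \<in> T) x y else reach ?A (\<lambda>a b. {a, b} \<in> T) x v"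
      by (rule restrict_reach[OF r xy(1) vA AV c5 c6])
    then have "reach ?A (\<lambda>a b. {a, b} \<in> T) x y" using xy(2) by presburger
    then show ?thesis
    proof (rule reach_mono)
      fix a b assume ab: "a \<in> ?A" "b \<in> ?A" "{a, b} \<in> T"
      then have "{a, b} \<in> edges V E" using TV by blast
      then have "a \<noteq> b \<and> (E a b \<or> E b a)" using edge_endpoints[of a b V E] by blast
      then have "{a, b} \<in> edges ?A E" using ab(1,2) edge_intro[of a ?A b E] by blast
      then show "{a, b} \<in> T \<inter> edges ?A E" using ab(3) by blast
    qed (rule order_refl)
  qed
  then have "connected_graph ?A (\<lambda>a b. {a, b} \<in> T \<inter> edges ?A E)"
    unfolding connected_graph_def by blast
  moreover have "\<not> has_cycle (T \<inter> edges ?A E)" using nc has_cycle_mono[of "T \<inter> edges ?A E" T] by blast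
  moreover have "T \<inter> edges ?A E \<subseteq> edges ?A E" by blast
  ultimately show ?thesis unfolding spanning_tree_def by blast
qed

lemma union_st:
  assumes g: "\<And>C. C \<in> CC \<Longrightarrow> spanning_tree (C \<union> {v}) E (g C)"
  shows "spanning_tree V E (\<Union>C\<in>CC. g C)"
proof -
  let ?U = "\<Union>C\<in>CC. g C"
  have gsub: "g C \<subseteq> edges (C \<union> {v}) E" if "C \<in> CC" for C
    using g[OF that] unfolding spanning_tree_def by blast
  have sub: "?U \<subseteq> edges V E" using gsub EC_sub by blast
  have tov: "reach V (\<lambda>a b. {a, b} \<in> ?U) x v" if x: "x \<in> V" for x
  proof (cases "x = v")
    case True then show ?thesis using v reach_refl by metis
  next
    case False
    then obtain C where C: "C \<in> CC" "x \<in> C" using x cover by blast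
    have "reach (C \<union> {v}) (\<lambda>a b. {a, b} \<in> g C) x v"
      using g[OF C(1)] C(2) unfolding spanning_tree_def connected_graph_def by blast
    then show ?thesis
    proof (rule reach_mono)
      show "C \<union> {v} \<subseteq> V" using class_sub[OF C(1)] .
      fix a b assume "{a, b} \<in> g C" then show "{a, b} \<in> ?U" using C(1) by blast
    qed
  qed
  have conn: "connected_graph V (\<lambda>a b. {a, b} \<in> ?U)"
    unfolding connected_graph_def
  proof (intro conjI ballI)
    show "V \<noteq> {}" using v by blast
    fix x y assume "x \<in> V" "y \<in> V"
    then have xv: "reach V (\<lambda>a b. {a, b} \<in> ?U) x v" and yv: "reach V (\<lambda>a b. {a, b} \<in> ?U) y v"
      using tov by blast+
    have vy: "reach V (\<lambda>a b. {a, b} \<in> ?U) v y"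
      by (rule reach_sym[OF _ yv]) (simp add: insert_commute)
    show "reach V (\<lambda>a b. {a, b} \<in> ?U) x y"
      by (rule reach_trans[OF xv vy])
  qed
  have nc: "\<not> has_cycle ?U"
  proof
    assume "has_cycle ?U"
    then obtain vs where vs: "length vs \<ge> 3" "distinct vs"
        "\<forall>i < length vs. {vs ! i, vs ! ((i + 1) mod length vs)} \<in> ?U"
      unfolding has_cycle_def by blast
    let ?n = "length vs"
    obtain ws where ws: "length ws = ?n" "distinct ws"
        "\<forall>i < length ws. {ws ! i, ws ! ((i + 1) mod length ws)} \<in> ?U"
        and wsv: "\<forall>i < ?n - 1. ws ! i \<noteq> v"
    proof (cases "v \<in> set vs")
      case False
      have "\<forall>i < ?n - 1. vs ! i \<noteq> v"
      proof (intro allI impI)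
        fix i assume "i < ?n - 1"
        then have "i < ?n" by simp
        then show "vs ! i \<noteq> v" using False nth_mem by metis
      qed
      then show ?thesis using that[of vs] vs by blast
    next
      case True
      then obtain k where k: "k < ?n" "vs ! k = v" by (metis in_set_conv_nth)
      let ?ws = "rotate (k + 1) vs"
      have "?ws ! i \<noteq> v" if i: "i < ?n - 1" for i
      proof
        assume eq: "?ws ! i = v"
        have "i < ?n" using i by simp
        then have "?ws ! i = vs ! ((k + 1 + i) mod ?n)" by (rule nth_rotate)
        moreover have "(k + 1 + i) mod ?n \<noteq> k"
        proof (cases "k + 1 + i < ?n")
          case True then show ?thesis by simp
        next
          case False
          then have "(k + 1 + i) mod ?n = k + 1 + i - ?n"
            using i k by (simp add: le_mod_geq)
          then show ?thesis using i k(1) False by arith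
        qed
        moreover have idx: "(k + 1 + i) mod ?n < ?n" by (rule mod_less_divisor) (use k(1) in linarith)
        ultimately have "vs ! ((k + 1 + i) mod ?n) = vs ! k" using eq k(2) by simp
        then have "(k + 1 + i) mod ?n = k" using nth_eq_iff_index_eq[OF vs(2) idx k(1)] by blast
        then show False using \<open>(k + 1 + i) mod ?n \<noteq> k\<close> by blast
      qed
      then show ?thesis using that[of ?ws] vs cycle_rotate[OF vs(3), of "k + 1"] by simp
    qed
    have n3: "?n \<ge> 3" using vs by simp
    have edgeU: "{ws ! i, ws ! ((i + 1) mod ?n)} \<in> ?U" if "i < ?n" for i using ws that by simp
    moreover have "{ws ! 0, ws ! ((0 + 1) mod ?n)} \<in> ?U" by (rule edgeU) (use n3 in linarith)
    moreover have "(0 + 1) mod ?n = 1" using n3 by simp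
    ultimately have "{ws ! 0, ws ! 1} \<in> ?U" by simp
    then have "{ws ! 0, ws ! 1} \<in> edges V E" using sub by blast
    then have "ws ! 0 \<in> V" using edge_endpoints[of "ws ! 0" "ws ! 1" V E] by blast
    moreover have "ws ! 0 \<noteq> v" using wsv n3 by simp
    ultimately have "ws ! 0 \<in> \<Union>CC" using cover by blast
    then obtain C0 where C0: "C0 \<in> CC" "ws ! 0 \<in> C0" by blast
    have C0v: "v \<notin> C0" using C0(1) cover by blast
    have inE: "a \<in> C' \<union> {v} \<and> b \<in> C' \<union> {v}" if "{a, b} \<in> g C'" "C' \<in> CC" for a b C'
    proof -
      have "{a, b} \<in> edges (C' \<union> {v}) E" using gsub[OF that(2)] that(1) by blast
      then show ?thesis using edge_endpoints[of a b "C' \<union> {v}" E] by blast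
    qed
    have claim: "ws ! i = v \<or> ws ! i \<in> C0" if "i < ?n" for i
      using that
    proof (induction i)
      case 0 then show ?case using C0 by simp
    next
      case (Suc i)
      show ?case
      proof (cases "ws ! Suc i = v")
        case False
        have "i < ?n - 1" using Suc.prems by simp
        then have "ws ! i \<noteq> v" using wsv by blast
        moreover have "ws ! i = v \<or> ws ! i \<in> C0" using Suc.IH \<open>i < ?n - 1\<close> by simp
        ultimately have "ws ! i \<in> C0" by blast
        moreover have "{ws ! i, ws ! Suc i} \<in> ?U" using edgeU[of i] Suc.prems by simp
        then obtain C' where C': "C' \<in> CC" "{ws ! i, ws ! Suc i} \<in> g C'" by blast
        moreover have "ws ! i \<noteq> v" using wsv \<open>i < ?n - 1\<close> by blast
        ultimately have "ws ! i \<in> C'" using inE[OF C'(2,1)] by blast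
        then have "C' = C0" using unique_class[OF C'(1) C0(1)] \<open>ws ! i \<in> C0\<close> by blast
        then show ?thesis using inE[OF C'(2,1)] False by blast
      qed simp
    qed
    have "{ws ! i, ws ! ((i + 1) mod ?n)} \<in> g C0" if i: "i < ?n" for i
    proof -
      let ?j = "(i + 1) mod ?n"
      have j: "?j < ?n" by (rule mod_less_divisor) (use i in linarith)
      have "?j \<noteq> i"
      proof (cases "i + 1 < ?n")
        case True then show ?thesis by simp
      next
        case False then have "i + 1 = ?n" using i by simp
        then show ?thesis using n3 by simp
      qed
      then have ne: "ws ! i \<noteq> ws ! ?j" using ws(2) i j ws(1) by (simp add: nth_eq_iff_index_eq)
      obtain C' where C': "C' \<in> CC" "{ws ! i, ws ! ?j} \<in> g C'" using edgeU[OF i] by blast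
      have "ws ! i \<in> C0 \<or> ws ! ?j \<in> C0" using claim[OF i] claim[OF j] ne by metis
      then have "C' = C0"
      proof
        assume "ws ! i \<in> C0"
        moreover have "ws ! i \<in> C'" using inE[OF C'(2,1)] C0v \<open>ws ! i \<in> C0\<close> by blast
        ultimately show ?thesis using unique_class[OF C'(1) C0(1)] by blast
      next
        assume "ws ! ?j \<in> C0"
        moreover have "ws ! ?j \<in> C'" using inE[OF C'(2,1)] C0v \<open>ws ! ?j \<in> C0\<close> by (metis Un_iff singletonD)
        ultimately show ?thesis using unique_class[OF C'(1) C0(1)] by blast
      qed
      then show ?thesis using C' by simp
    qed
    then have "length ws \<ge> 3 \<and> distinct ws \<and> (\<forall>i < length ws. {ws ! i, ws ! ((i + 1) mod length ws)} \<in> g C0)"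
      using ws n3 by simp
    then have "has_cycle (g C0)" unfolding has_cycle_def by blast
    then show False using g[OF C0(1)] unfolding spanning_tree_def by blast
  qed
  show ?thesis unfolding spanning_tree_def using sub conn nc by blast
qed

lemma wedge_bij:
  "bij_betw (\<lambda>T. \<lambda>C\<in>CC. T \<inter> edges (C \<union> {v}) E) {T. spanning_tree V E T}
     (\<Pi>\<^sub>E C\<in>CC. {T. spanning_tree (C \<union> {v}) E T})"
  unfolding bij_betw_def
proof (intro conjI)
  let ?f = "\<lambda>T. \<lambda>C\<in>CC. T \<inter> edges (C \<union> {v}) E"
  have rec: "T = (\<Union>C\<in>CC. ?f T C)" if "spanning_tree V E T" for T
  proof
    show "T \<subseteq> (\<Union>C\<in>CC. ?f T C)"
    proof
      fix e assume e: "e \<in> T"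
      then have "e \<in> edges V E" using that unfolding spanning_tree_def by blast
      then obtain C where "C \<in> CC" "e \<in> edges (C \<union> {v}) E" using edges_cover by blast
      then have "e \<in> ?f T C" using e by simp
      then show "e \<in> (\<Union>C\<in>CC. ?f T C)" using \<open>C \<in> CC\<close> by blast
    qed
    show "(\<Union>C\<in>CC. ?f T C) \<subseteq> T" by (simp add: SUP_le_iff)
  qed
  show "inj_on ?f {T. spanning_tree V E T}"
  proof (rule inj_onI)
    fix T T' assume T: "T \<in> {T. spanning_tree V E T}" and T': "T' \<in> {T. spanning_tree V E T}"
      and eq: "?f T = ?f T'"
    have "T = (\<Union>C\<in>CC. ?f T C)" using rec T by blast
    also have "\<dots> = (\<Union>C\<in>CC. ?f T' C)" using eq by simp
    also have "\<dots> = T'" using rec T' by blast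
    finally show "T = T'" .
  qed
  show "?f ` {T. spanning_tree V E T} = (\<Pi>\<^sub>E C\<in>CC. {T. spanning_tree (C \<union> {v}) E T})"
  proof
    show "?f ` {T. spanning_tree V E T} \<subseteq> (\<Pi>\<^sub>E C\<in>CC. {T. spanning_tree (C \<union> {v}) E T})"
    proof
      fix h assume "h \<in> ?f ` {T. spanning_tree V E T}"
      then obtain T where T: "spanning_tree V E T" and h: "h = ?f T" by blast
      show "h \<in> (\<Pi>\<^sub>E C\<in>CC. {T. spanning_tree (C \<union> {v}) E T})"
        unfolding h
      proof (rule PiE_I)
        fix C assume "C \<in> CC"
        then have "?f T C = T \<inter> edges (C \<union> {v}) E" by (rule restrict_apply')
        then show "?f T C \<in> {T. spanning_tree (C \<union> {v}) E T}" using restrict_st[OF T \<open>C \<in> CC\<close>] by (simp only: mem_Collect_eq)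
      next
        fix C assume "C \<notin> CC"
        then show "?f T C = undefined" by simp
      qed
    qed
  next
    show "(\<Pi>\<^sub>E C\<in>CC. {T. spanning_tree (C \<union> {v}) E T}) \<subseteq> ?f ` {T. spanning_tree V E T}"
    proof
      fix g assume g: "g \<in> (\<Pi>\<^sub>E C\<in>CC. {T. spanning_tree (C \<union> {v}) E T})"
      have st: "spanning_tree (C \<union> {v}) E (g C)" if "C \<in> CC" for C
        using PiE_mem[OF g that] by simp
      have gsub: "g C \<subseteq> edges (C \<union> {v}) E" if "C \<in> CC" for C
        using st[OF that] unfolding spanning_tree_def by blast
      let ?U = "\<Union>C\<in>CC. g C"
      have fe: "?f ?U = g"
      proof
        fix C show "?f ?U C = g C"
        proof (cases "C \<in> CC")
          case True
          have "?U \<inter> edges (C \<union> {v}) E = g C"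
          proof
            show "g C \<subseteq> ?U \<inter> edges (C \<union> {v}) E" using True gsub[OF True] by blast
            show "?U \<inter> edges (C \<union> {v}) E \<subseteq> g C"
            proof
              fix e assume "e \<in> ?U \<inter> edges (C \<union> {v}) E"
              then obtain C' where C': "C' \<in> CC" "e \<in> g C'" "e \<in> edges (C \<union> {v}) E" by blast
              have "e \<in> edges (C' \<union> {v}) E" using gsub[OF C'(1)] C'(2) by blast
              then have "C' = C" by (rule EC_disj[OF C'(1) True _ C'(3)])
              then show "e \<in> g C" using C'(2) by simp
            qed
          qed
          then show ?thesis using True by simp
        next
          case False then show ?thesis using PiE_arb[OF g False] by simp
        qed
      qed
      have Umem: "?U \<in> {T. spanning_tree V E T}" using union_st[OF st] by blast
      show "g \<in> ?f ` {T. spanning_tree V E T}" by (rule image_eqI[of g ?f ?U, OF fe[symmetric] Umem])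
    qed
  qed
qed

lemma wedge_count:
  assumes "finite CC"
  shows "num_spanning_trees V E = (\<Prod>C\<in>CC. num_spanning_trees (C \<union> {v}) E)"
  unfolding num_spanning_trees_def
  using bij_betw_same_card[OF wedge_bij] card_PiE[OF assms] by simp

end


section \<open>Group theory for p-groups\<close>

context group
begin

lemma pg_ord:
  assumes fin: "finite (carrier G)" and pr: "Factorial_Ring.prime p" and pg: "order G = p ^ n"
    and x: "x \<in> carrier G" "x \<noteq> \<one>"
  shows "\<exists>m. ord x = p * p ^ m"
proof -
  have "ord x dvd p ^ n" using ord_dvd_group_order[OF x(1)] pg by simp
  then obtain k where k: "ord x = p ^ k" using divides_primepow_nat[OF pr] by blast
  have "k \<noteq> 0" using k ord_eq_1[OF x(1)] x(2) by auto
  then obtain m where "k = Suc m" using not0_implies_Suc by blast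
  then show ?thesis using k by auto
qed

definition gen1 :: "nat \<Rightarrow> 'a \<Rightarrow> 'a" where
  "gen1 p x = x [^] (ord x div p)"

lemma gen1_facts:
  assumes fin: "finite (carrier G)" and pr: "Factorial_Ring.prime p" and pg: "order G = p ^ n"
    and x: "x \<in> carrier G" "x \<noteq> \<one>"
  shows "gen1 p x \<in> carrier G" "ord (gen1 p x) = p" "gen1 p x \<in> generate G {x}"
    "gen1 p x \<noteq> \<one>" "card (generate G {gen1 p x}) = p"
proof -
  obtain m where k: "ord x = p * p ^ m" using pg_ord[OF fin pr pg x] by blast
  have p1: "p > 1" using pr prime_gt_1_nat by blast
  have d: "ord x div p = p ^ m" using k p1 by simp
  show c: "gen1 p x \<in> carrier G" unfolding gen1_def using x(1) by simp
  have "ord x div p dvd ord x" using d k by simp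
  moreover have "ord x div p \<noteq> 0" using d p1 by simp
  ultimately have "ord (gen1 p x) = ord x div (ord x div p)" unfolding gen1_def using ord_pow x(1) by blast
  also have "\<dots> = p" using d k p1 by simp
  finally show o: "ord (gen1 p x) = p" .
  show "gen1 p x \<in> generate G {x}" unfolding gen1_def generate_pow_on_finite_carrier[OF fin x(1)] by blast
  show "gen1 p x \<noteq> \<one>" using o p1 ord_eq_1[OF c] by auto
  show "card (generate G {gen1 p x}) = p" using generate_pow_card[OF c] o by simp
qed

lemma gen1_unique:
  assumes fin: "finite (carrier G)" and pr: "Factorial_Ring.prime p" and pg: "order G = p ^ n"
    and x: "x \<in> carrier G" "x \<noteq> \<one>" and y: "y \<in> generate G {x}" "ord y = p"
  shows "generate G {y} = generate G {gen1 p x}"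
proof -
  obtain m where k: "ord x = p * p ^ m" using pg_ord[OF fin pr pg x] by blast
  have p1: "p > 1" using pr prime_gt_1_nat by blast
  obtain i :: nat where i: "y = x [^] i" using y(1) unfolding generate_pow_on_finite_carrier[OF fin x(1)] by blast
  have yc: "y \<in> carrier G" using i x(1) by simp
  have "x [^] (i * p) = \<one>" using i y(2) yc x(1) by (metis nat_pow_pow pow_ord_eq_1)
  then have "p * p ^ m dvd i * p" using pow_eq_id[OF x(1)] k by simp
  then have "p ^ m dvd i" using p1 by (simp add: mult.commute)
  then obtain j where j: "i = p ^ m * j" by blast
  have d: "ord x div p = p ^ m" using k p1 by simp
  have "y = gen1 p x [^] j" unfolding gen1_def d i j using x(1) by (simp add: nat_pow_pow)
  then have "y \<in> generate G {gen1 p x}"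
    using generate_pow_on_finite_carrier[OF fin gen1_facts(1)[OF fin pr pg x]] by blast
  moreover have "subgroup (generate G {gen1 p x}) G"
    using generate_is_subgroup gen1_facts(1)[OF fin pr pg x] by simp
  ultimately have sub: "generate G {y} \<subseteq> generate G {gen1 p x}"
    using generate_subgroup_incl[of "{y}" "generate G {gen1 p x}"] by blast
  have "card (generate G {y}) = p" using generate_pow_card[OF yc] y(2) by simp
  moreover have "card (generate G {gen1 p x}) = p" using gen1_facts(5)[OF fin pr pg x] .
  moreover have "generate G {gen1 p x} \<subseteq> carrier G"
    using generate_incl gen1_facts(1)[OF fin pr pg x] by simp
  then have "finite (generate G {gen1 p x})" using fin finite_subset by blast
  ultimately show ?thesis using sub card_subset_eq by metis
qed

end


lemma components_image: "components W E = (\<lambda>x. {y \<in> W. reach W E x y}) ` W"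
  unfolding components_def by blast

context
  fixes W :: "'a set" and E :: "'a \<Rightarrow> 'a \<Rightarrow> bool"
  assumes symE: "\<And>a b. E a b \<Longrightarrow> E b a"
begin

lemma comp_eq:
  assumes "x \<in> W" "y \<in> W" "reach W E x y"
  shows "{z \<in> W. reach W E x z} = {z \<in> W. reach W E y z}"
proof -
  have "reach W E y x" using reach_sym[OF symE assms(3)] .
  then show ?thesis using assms(3) reach_trans[of W E x y] reach_trans[of W E y x] by blast
qed

lemma comp_eq_iff:
  assumes "x \<in> W" "y \<in> W"
  shows "{z \<in> W. reach W E x z} = {z \<in> W. reach W E y z} \<longleftrightarrow> reach W E x y"
proof
  assume "{z \<in> W. reach W E x z} = {z \<in> W. reach W E y z}"
  moreover have "y \<in> {z \<in> W. reach W E y z}" using assms reach_refl by fastforce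
  ultimately show "reach W E x y" by blast
qed (rule comp_eq[OF assms])

lemma components_cover: "\<Union>(components W E) = W"
proof
  show "\<Union>(components W E) \<subseteq> W" unfolding components_def by blast
  show "W \<subseteq> \<Union>(components W E)"
  proof
    fix x assume x: "x \<in> W"
    then have "x \<in> {y \<in> W. reach W E x y}" using reach_refl by fastforce
    then show "x \<in> \<Union>(components W E)" unfolding components_image using x by blast
  qed
qed

lemma components_disj:
  assumes "C \<in> components W E" "C' \<in> components W E" "C \<noteq> C'"
  shows "C \<inter> C' = {}"
proof (rule ccontr)
  assume "C \<inter> C' \<noteq> {}"
  then obtain z where z: "z \<in> C" "z \<in> C'" by blast
  obtain x where x: "x \<in> W" "C = {y \<in> W. reach W E x y}" using assms(1) unfolding components_image by blast
  obtain x' where x': "x' \<in> W" "C' = {y \<in> W. reach W E x' y}" using assms(2) unfolding components_image by blast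
  have "C = {y \<in> W. reach W E z y}" using comp_eq[of x z] x z by blast
  moreover have "C' = {y \<in> W. reach W E z y}" using comp_eq[of x' z] x' z by blast
  ultimately show False using assms(3) by simp
qed

lemma components_cross:
  assumes "C \<in> components W E" "C' \<in> components W E" "C \<noteq> C'" "a \<in> C" "b \<in> C'"
  shows "\<not> E a b"
proof
  assume ab: "E a b"
  obtain x where x: "x \<in> W" "C = {y \<in> W. reach W E x y}" using assms(1) unfolding components_image by blast
  have a: "a \<in> W" "reach W E x a" using assms(4) x by auto
  have bW: "b \<in> W" using assms(2,5) unfolding components_def by blast
  have "reach W E a b" using reach_step[where E=E, OF a(1) bW ab] .
  then have "b \<in> C" using x a bW reach_trans by fastforce
  then show False using components_disj[OF assms(1-3)] assms(5) by blast
qed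

end

lemma card_image_cong:
  assumes "\<And>x y. x \<in> W \<Longrightarrow> y \<in> W \<Longrightarrow> f x = f y \<longleftrightarrow> g x = g y"
  shows "card (f ` W) = card (g ` W)"
proof -
  define h where "h A = g (SOME x. x \<in> W \<and> f x = A)" for A
  have hf: "h (f x) = g x" if x: "x \<in> W" for x
  proof -
    have "\<exists>z. z \<in> W \<and> f z = f x" using x by blast
    then have "(SOME z. z \<in> W \<and> f z = f x) \<in> W \<and> f (SOME z. z \<in> W \<and> f z = f x) = f x"
      by (rule someI_ex)
    then show ?thesis unfolding h_def using assms x by blast
  qed
  have inj: "inj_on h (f ` W)"
  proof (rule inj_onI)
    fix A B assume "A \<in> f ` W" "B \<in> f ` W" "h A = h B"
    then obtain x y where "x \<in> W" "y \<in> W" "A = f x" "B = f y" "h A = h B" by blast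
    then show "A = B" using hf assms by metis
  qed
  have "h ` f ` W = g ` W"
  proof
    show "h ` f ` W \<subseteq> g ` W" using hf by auto
    show "g ` W \<subseteq> h ` f ` W" using hf by (metis image_eqI image_subsetI)
  qed
  then show ?thesis using card_image[OF inj] by simp
qed


section \<open>Components of the punctured power graph of a p-group\<close>

lemma power_adj_sym: "power_adj G a b \<Longrightarrow> power_adj G b a"
  unfolding power_adj_def by blast

context group
begin

lemma gen_sub:
  assumes "b \<in> carrier G" "a \<in> generate G {b}"
  shows "generate G {a} \<subseteq> generate G {b}"
proof -
  have "subgroup (generate G {b}) G" using generate_is_subgroup assms(1) by simp
  then show ?thesis using generate_subgroup_incl[of "{a}" "generate G {b}"] assms(2) by blast
qed

lemma gen_self: "a \<in> carrier G \<Longrightarrow> a \<in> generate G {a}"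
  using generate.incl[of a "{a}" G] by simp

lemma pg_components:
  assumes fin: "finite (carrier G)" and pr: "Factorial_Ring.prime p" and pg: "order G = p ^ n"
  shows "card (components (carrier G - {\<one>}) (power_adj G)) = num_cyclic_subgroups_of_order G p"
proof -
  let ?W = "carrier G - {\<one>}"
  let ?E = "power_adj G"
  define pi where "pi x = generate G {gen1 p x}" for x
  have p1: "p > 1" using pr prime_gt_1_nat by blast
  note gf = gen1_facts[OF fin pr pg]
  have pi_sub: "pi x \<subseteq> generate G {x}" if "x \<in> ?W" for x
    unfolding pi_def using gen_sub gf(3) that by blast
  have adj: "pi x = pi y" if xy: "x \<in> ?W" "y \<in> ?W" "?E x y" for x y
  proof -
    have "generate G {x} \<subseteq> generate G {y} \<or> generate G {y} \<subseteq> generate G {x}"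
      using xy(3) unfolding power_adj_def by blast
    then show ?thesis
    proof
      assume "generate G {x} \<subseteq> generate G {y}"
      then have "gen1 p x \<in> generate G {y}" using gf(3)[of x] xy(1) by blast
      then show ?thesis unfolding pi_def using gen1_unique[OF fin pr pg, of y "gen1 p x"] gf(2)[of x] xy by blast
    next
      assume "generate G {y} \<subseteq> generate G {x}"
      then have "gen1 p y \<in> generate G {x}" using gf(3)[of y] xy(2) by blast
      then have "generate G {gen1 p y} = generate G {gen1 p x}"
        using gen1_unique[OF fin pr pg, of x "gen1 p y"] gf(2)[of y] xy by blast
      then show ?thesis unfolding pi_def by simp
    qed
  qed
  have reach_pi: "pi x = pi y" if r: "reach ?W ?E x y" and x: "x \<in> ?W" for x y
    using r unfolding reach_def
  proof (induction rule: rtranclp_induct)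
    case base then show ?case by simp
  next
    case (step y z)
    then show ?case using adj[of y z] by simp
  qed
  have near: "reach ?W ?E h z" if "h \<in> ?W" "z \<in> ?W" "generate G {h} \<subseteq> generate G {z}" for h z
  proof (cases "h = z")
    case True then show ?thesis using reach_refl that(1) by metis
  next
    case False
    then have "?E h z" unfolding power_adj_def using that(3) by blast
    then show ?thesis using reach_step[where E="?E", OF that(1,2)] by blast
  qed
  have pi_reach: "reach ?W ?E x y" if xy: "x \<in> ?W" "y \<in> ?W" "pi x = pi y" for x y
  proof -
    let ?g = "gen1 p x"
    have gW: "?g \<in> ?W" using gf(1,4)[of x] xy(1) by blast
    have "reach ?W ?E ?g x" using near[OF gW xy(1)] pi_sub[OF xy(1)] unfolding pi_def by blast
    then have r1: "reach ?W ?E x ?g" using reach_sym[where E="power_adj G", OF power_adj_sym] by blast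
    have "generate G {?g} \<subseteq> generate G {y}" using pi_sub[OF xy(2)] xy(3) unfolding pi_def by simp
    then have r2: "reach ?W ?E ?g y" using near[OF gW xy(2)] by blast
    show ?thesis using reach_trans[OF r1 r2] .
  qed
  have "card (components ?W ?E) = card ((\<lambda>x. {y \<in> ?W. reach ?W ?E x y}) ` ?W)"
    unfolding components_image ..
  also have "\<dots> = card (pi ` ?W)"
  proof (rule card_image_cong)
    fix x y assume xy: "x \<in> ?W" "y \<in> ?W"
    have "{z \<in> ?W. reach ?W ?E x z} = {z \<in> ?W. reach ?W ?E y z} \<longleftrightarrow> reach ?W ?E x y"
      using comp_eq_iff[where E="power_adj G", OF power_adj_sym xy] .
    also have "\<dots> \<longleftrightarrow> pi x = pi y" using reach_pi[of x y] pi_reach[OF xy] xy(1) by blast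
    finally show "{z \<in> ?W. reach ?W ?E x z} = {z \<in> ?W. reach ?W ?E y z} \<longleftrightarrow> pi x = pi y" .
  qed
  also have "pi ` ?W = {H. (\<exists>x \<in> carrier G. H = generate G {x}) \<and> card H = p}"
  proof
    show "pi ` ?W \<subseteq> {H. (\<exists>x \<in> carrier G. H = generate G {x}) \<and> card H = p}"
    proof
      fix H assume "H \<in> pi ` ?W"
      then obtain x where x: "x \<in> ?W" "H = pi x" by blast
      show "H \<in> {H. (\<exists>x \<in> carrier G. H = generate G {x}) \<and> card H = p}"
        using gf(1,5)[of x] x unfolding pi_def by blast
    qed
    show "{H. (\<exists>x \<in> carrier G. H = generate G {x}) \<and> card H = p} \<subseteq> pi ` ?W"
    proof
      fix H assume "H \<in> {H. (\<exists>x \<in> carrier G. H = generate G {x}) \<and> card H = p}"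
      then obtain x where x: "x \<in> carrier G" "H = generate G {x}" "card H = p" by blast
      have o: "ord x = p" using generate_pow_card[OF x(1)] x(2,3) by simp
      have "x \<noteq> \<one>" using o p1 by auto
      then have xW: "x \<in> ?W" using x(1) by blast
      have "generate G {x} = pi x" unfolding pi_def
        using gen1_unique[OF fin pr pg x(1) \<open>x \<noteq> \<one>\<close> gen_self[OF x(1)] o] .
      then show "H \<in> pi ` ?W" using x(2) xW by blast
    qed
  qed
  finally show ?thesis unfolding num_cyclic_subgroups_of_order_def .
qed

end

theorem corollary3p2:
  fixes G :: "('a, 'b) monoid_scheme" and p :: nat
  assumes "Factorial_Ring.prime p" and "group G" and "finite (carrier G)"
    and "\<exists>n. order G = p ^ n"
  shows "card (components (carrier G - {\<one>\<^bsub>G\<^esub>}) (power_adj G))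
           = num_cyclic_subgroups_of_order G p
       \<and> num_spanning_trees (carrier G) (power_adj G)
           = (\<Prod>C \<in> components (carrier G - {\<one>\<^bsub>G\<^esub>}) (power_adj G).
                num_spanning_trees (C \<union> {\<one>\<^bsub>G\<^esub>}) (power_adj G))"
proof
  interpret group G by fact
  obtain n where n: "order G = p ^ n" using assms(4) by blast
  show "card (components (carrier G - {\<one>\<^bsub>G\<^esub>}) (power_adj G)) = num_cyclic_subgroups_of_order G p"
    using pg_components[OF assms(3) assms(1) n] .
  let ?CC = "components (carrier G - {\<one>\<^bsub>G\<^esub>}) (power_adj G)"
  have v: "\<one>\<^bsub>G\<^esub> \<in> carrier G" by simp
  have cover: "\<Union>?CC = carrier G - {\<one>\<^bsub>G\<^esub>}" using components_cover[where E="power_adj G", OF power_adj_sym] .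
  have disj: "\<And>C C'. C \<in> ?CC \<Longrightarrow> C' \<in> ?CC \<Longrightarrow> C \<noteq> C' \<Longrightarrow> C \<inter> C' = {}"
    using components_disj[where E="power_adj G", OF power_adj_sym] by blast
  have cross: "\<And>C C' x y. C \<in> ?CC \<Longrightarrow> C' \<in> ?CC \<Longrightarrow> C \<noteq> C' \<Longrightarrow> x \<in> C \<Longrightarrow> y \<in> C' \<Longrightarrow> \<not> power_adj G x y"
    using components_cross[where E="power_adj G", OF power_adj_sym] by blast
  have fin: "finite ?CC"
  proof -
    have "?CC \<subseteq> Pow (carrier G - {\<one>\<^bsub>G\<^esub>})" unfolding components_def by blast
    then show ?thesis using assms(3) finite_subset by blast
  qed
  show "num_spanning_trees (carrier G) (power_adj G)
      = (\<Prod>C \<in> ?CC. num_spanning_trees (C \<union> {\<one>\<^bsub>G\<^esub>}) (power_adj G))"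
    using wedge_count[OF v cover disj cross fin] .
qed

end
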